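(* Let $L\subseteq\bigwedge^{k}V$ be a subspace such that $e_{1}\wedge e_{2}\wedge x=0$ for all $x\in L$. Then for every $3\leq i<j\leq n$, also $e_{1}\wedge e_{2}\wedge y=0$ for all $y\in N_{j\to i}L$.
   Context: $\mathbb{F}$ is a field (assumed throughout the paper, for expository purposes, to have characteristic not $2$), $V$ is an $n$-dimensional $\mathbb{F}$-vector space with a fixed basis $e_1,\dots,e_n$, and $\bigwedge V$ its exterior algebra. For $j\in[n]$, $V^{(j)}$ is the span of $\{e_h:h\neq j\}$. Slow shift: for distinct $i,j\in[n]$ and nonzero $m\in\bigwedge^kV$, write uniquely $m=x+e_j\wedge y$ with $x\in\bigwedge^kV^{(j)}$, $y\in\bigwedge^{k-1}V^{(j)}$, and set $N_{j\to i}m=x+e_i\wedge y$ if this is nonzero, and $N_{j\to i}m=e_j\wedge y$ otherwise (the limit as $t\to0$ of the projective action of the linear map $e_j\mapsto e_i+te_j$ fixing the other $e_h$). For a subspace $L$ of $\bigwedge^kV$, $N_{j\to i}L$ is the span of $\{N_{j\to i}m:m\in L\setminus\{0\}\}$. *)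

theory Defs
  imports Main
begin

text \<open>Concrete model of the exterior algebra of V = F^n with fixed basis e_1,...,e_n.
  An element of the exterior algebra is a coefficient function on finite index sets:
  f S is the coefficient of e_S = e_{s1} wedge ... wedge e_{sr} (s1 < ... < sr).\<close>

type_synonym 'a ext = "nat set \<Rightarrow> 'a"

text \<open>Elements of the k-th exterior power of the span of {e_h : h in I}.\<close>
definition ext_pow :: "nat \<Rightarrow> nat set \<Rightarrow> ('a::field) ext set" where
  "ext_pow k I = {f. \<forall>S. f S \<noteq> 0 \<longrightarrow> S \<subseteq> I \<and> card S = k}"

definition ext_zero :: "('a::field) ext" where
  "ext_zero = (\<lambda>S. 0)"

definition ext_add :: "('a::field) ext \<Rightarrow> 'a ext \<Rightarrow> 'a ext" where
  "ext_add f g = (\<lambda>S. f S + g S)"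

definition ext_smult :: "'a::field \<Rightarrow> 'a ext \<Rightarrow> 'a ext" where
  "ext_smult c f = (\<lambda>S. c * f S)"

definition basis_e :: "nat \<Rightarrow> ('a::field) ext" where
  "basis_e i = (\<lambda>S. if S = {i} then 1 else 0)"

text \<open>Sign of e_A wedge e_B relative to e_{A union B}: (-1)^(number of inversions).\<close>
definition wsign :: "nat set \<Rightarrow> nat set \<Rightarrow> 'a::field" where
  "wsign A B = (-1) ^ card {(a, b). a \<in> A \<and> b \<in> B \<and> b < a}"

definition wedge :: "('a::field) ext \<Rightarrow> 'a ext \<Rightarrow> 'a ext" where
  "wedge f g = (\<lambda>S. \<Sum>A \<in> Pow S. wsign A (S - A) * f A * g (S - A))"

definition lspan :: "('a::field) ext set \<Rightarrow> 'a ext set" where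
  "lspan X = {v. \<exists>F c. finite F \<and> F \<subseteq> X \<and> v = (\<lambda>S. \<Sum>u\<in>F. c u * u S)}"

definition is_subspace :: "nat \<Rightarrow> nat \<Rightarrow> ('a::field) ext set \<Rightarrow> bool" where
  "is_subspace n k L \<longleftrightarrow> L \<subseteq> ext_pow k {1..n} \<and> ext_zero \<in> L \<and>
     (\<forall>x\<in>L. \<forall>y\<in>L. ext_add x y \<in> L) \<and> (\<forall>c. \<forall>x\<in>L. ext_smult c x \<in> L)"

definition decomp :: "nat \<Rightarrow> nat \<Rightarrow> nat \<Rightarrow> ('a::field) ext \<Rightarrow> 'a ext \<times> 'a ext" where
  "decomp n k j m = (THE p. fst p \<in> ext_pow k ({1..n} - {j}) \<and>
                            snd p \<in> ext_pow (k - 1) ({1..n} - {j}) \<and>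
                            m = ext_add (fst p) (wedge (basis_e j) (snd p)))"

definition slow_shift :: "nat \<Rightarrow> nat \<Rightarrow> nat \<Rightarrow> nat \<Rightarrow> ('a::field) ext \<Rightarrow> 'a ext" where
  "slow_shift n k j i m = (case decomp n k j m of (x, y) \<Rightarrow>
      (if ext_add x (wedge (basis_e i) y) \<noteq> ext_zero
       then ext_add x (wedge (basis_e i) y)
       else wedge (basis_e j) y))"

definition slow_shift_space :: "nat \<Rightarrow> nat \<Rightarrow> nat \<Rightarrow> nat \<Rightarrow> ('a::field) ext set \<Rightarrow> 'a ext set" where
  "slow_shift_space n k j i L = lspan (slow_shift n k j i ` (L - {ext_zero}))"

end

theory Submission
  imports Defs
begin

lemma wedge_delta:
  "wedge (\<lambda>A. if A = D then c else 0) f S =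
     (if D \<subseteq> S \<and> finite S then wsign D (S-D) * c * f (S-D) else 0)"
proof (cases "finite S")
  case False then show ?thesis by (simp add: wedge_def)
next
  case True
  have "wedge (\<lambda>A. if A = D then c else 0) f S =
      (\<Sum>A\<in>Pow S. if A = D then wsign D (S-D) * c * f (S-D) else 0)"
    unfolding wedge_def by (intro sum.cong) auto
  also have "\<dots> = (if D \<in> Pow S then wsign D (S-D) * c * f (S-D) else 0)"
    using True by (simp add: sum.delta')
  finally show ?thesis using True by auto
qed

lemma wedge_basis:
  "wedge (basis_e a) f S = (if a \<in> S \<and> finite S then wsign {a} (S-{a}) * f (S-{a}) else 0)"
  unfolding basis_e_def by (simp add: wedge_delta)

lemma wsign_nz: "wsign A B \<noteq> (0::'a::field)"
  by (simp add: wsign_def)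

lemma wsign_sq: "wsign A B * wsign A B = (1::'a::field)"
  by (simp add: wsign_def power_add[symmetric])

lemma e12: "wedge (basis_e 1) (basis_e 2) = (\<lambda>A. if A = {1::nat,2} then (1::'a::field) else 0)"
proof
  fix S :: "nat set"
  have w: "wsign {1::nat} {2} = (1::'a)"
  proof -
    have "{(a, b). a \<in> {1::nat} \<and> b \<in> {2::nat} \<and> b < a} = {}" by auto
    then have c: "card {(a, b). a \<in> {1::nat} \<and> b \<in> {2::nat} \<and> b < a} = 0" by (simp only: card.empty)
    show ?thesis unfolding wsign_def by (simp only: c power_0)
  qed
  show "wedge (basis_e 1) (basis_e 2) S = (if S = {1::nat,2} then (1::'a) else 0)"
  proof (cases "S = {1,2}")
    case True
    then have "S - {1} = {2}" "1 \<in> S" "finite S" by auto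
    then show ?thesis using True w unfolding wedge_basis by (simp add: basis_e_def)
  next
    case False
    then have "1 \<in> S \<Longrightarrow> S - {1} \<noteq> {2}" by auto
    then show ?thesis using False unfolding wedge_basis by (auto simp: basis_e_def)
  qed
qed

lemma w12: "wedge (wedge (basis_e 1) (basis_e 2)) f S =
   (if {1::nat,2} \<subseteq> S \<and> finite S then wsign {1,2} (S-{1,2}) * f (S-{1,2}) else (0::'a::field))"
  unfolding e12 by (simp add: wedge_delta)

definition avoid12 :: "('a::field) ext \<Rightarrow> bool" where
  "avoid12 f \<longleftrightarrow> (\<forall>T. T \<inter> {1,2} = {} \<longrightarrow> finite T \<longrightarrow> f T = 0)"

lemma avoid12_wedge: "avoid12 f \<Longrightarrow> wedge (wedge (basis_e 1) (basis_e 2)) f = ext_zero"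
  unfolding ext_zero_def
proof
  fix S assume a: "avoid12 f"
  show "wedge (wedge (basis_e 1) (basis_e 2)) f S = 0"
  proof (cases "{1::nat,2} \<subseteq> S \<and> finite S")
    case True
    have "(S - {1,2}) \<inter> {1,2} = {}" by auto
    then have "f (S - {1,2}) = 0" using a True unfolding avoid12_def by auto
    then show ?thesis unfolding w12 by simp
  next
    case False then show ?thesis unfolding w12 by auto
  qed
qed

lemma wedge_avoid12: assumes "wedge (wedge (basis_e 1) (basis_e 2)) f = ext_zero"
  shows "avoid12 f"
  unfolding avoid12_def
proof (intro allI impI)
  fix T :: "nat set" assume d: "T \<inter> {1,2} = {}" and fT: "finite T"
  let ?S = "T \<union> {1,2}"
  have e: "?S - {1,2} = T" using d by auto
  have "wedge (wedge (basis_e 1) (basis_e 2)) f ?S = 0" using assms by (simp add: ext_zero_def)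
  then have "wsign {1::nat,2} T * f T = 0" using fT unfolding w12 e by simp
  then show "f T = 0" by (simp add: wsign_nz)
qed

lemma avoid12_basis: assumes "avoid12 f" "a \<notin> {1,2}" shows "avoid12 (wedge (basis_e a) f)"
  unfolding avoid12_def
proof (intro allI impI)
  fix T :: "nat set" assume d: "T \<inter> {1,2} = {}" and fT: "finite T"
  have "(T - {a}) \<inter> {1,2} = {}" using d by auto
  then have "f (T - {a}) = 0" using assms fT unfolding avoid12_def by auto
  then show "wedge (basis_e a) f T = 0" by (simp add: wedge_basis)
qed

lemma avoid12_add: "avoid12 f \<Longrightarrow> avoid12 g \<Longrightarrow> avoid12 (ext_add f g)"
  unfolding avoid12_def ext_add_def by auto

lemma decomp_eq:
  assumes m: "m \<in> ext_pow k {1..n}"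
  shows "decomp n k j m = ((\<lambda>T. if j \<in> T then 0 else m T),
           (\<lambda>T. if j \<in> T \<or> infinite T then 0 else wsign {j} T * m (insert j T)))"
    (is "_ = (?x, ?y)")
  unfolding decomp_def
proof (rule the_equality)
  have mS: "m S \<noteq> 0 \<Longrightarrow> S \<subseteq> {1..n} \<and> card S = k" for S using m by (auto simp: ext_pow_def)
  have "?x \<in> ext_pow k ({1..n} - {j})" using mS by (auto simp: ext_pow_def)
  moreover have "?y \<in> ext_pow (k-1) ({1..n} - {j})"
  proof -
    { fix T assume "?y T \<noteq> 0"
      then have j: "j \<notin> T" and f: "finite T" and mm: "m (insert j T) \<noteq> 0" by (auto split: if_splits)
      from mS[OF mm] have "insert j T \<subseteq> {1..n}" "card (insert j T) = k" by auto
      then have "T \<subseteq> {1..n} - {j} \<and> card T = k - 1" using j f by auto }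
    then show ?thesis by (auto simp: ext_pow_def)
  qed
  moreover have "m = ext_add ?x (wedge (basis_e j) ?y)"
  proof
    fix S
    show "m S = ext_add ?x (wedge (basis_e j) ?y) S"
    proof (cases "j \<in> S")
      case True
      show ?thesis
      proof (cases "finite S")
        case f: True
        have "insert j (S - {j}) = S" using True by auto
        then show ?thesis using True f
          by (simp add: ext_add_def wedge_basis mult.assoc[symmetric] wsign_sq)
      next
        case False
        have "m S = 0" using mS[of S] False finite_subset by auto
        then show ?thesis using False by (simp add: ext_add_def wedge_basis)
      qed
    next
      case False
      then show ?thesis by (simp add: ext_add_def wedge_basis)
    qed
  qed
  ultimately show "fst (?x, ?y) \<in> ext_pow k ({1..n} - {j}) \<and>
    snd (?x, ?y) \<in> ext_pow (k - 1) ({1..n} - {j}) \<and>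
    m = ext_add (fst (?x, ?y)) (wedge (basis_e j) (snd (?x, ?y)))" by simp
next
  fix p :: "'a ext \<times> 'a ext"
  assume h: "fst p \<in> ext_pow k ({1..n} - {j}) \<and>
    snd p \<in> ext_pow (k - 1) ({1..n} - {j}) \<and>
    m = ext_add (fst p) (wedge (basis_e j) (snd p))"
  obtain x y where p: "p = (x, y)" by (cases p)
  from h p have hx: "x \<in> ext_pow k ({1..n} - {j})" and hy: "y \<in> ext_pow (k - 1) ({1..n} - {j})"
    and hm: "m = ext_add x (wedge (basis_e j) y)" by auto
  have "x = ?x"
  proof
    fix T show "x T = ?x T"
    proof (cases "j \<in> T")
      case True then show ?thesis using hx by (auto simp: ext_pow_def)
    next
      case False then show ?thesis using hm by (simp add: ext_add_def wedge_basis)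
    qed
  qed
  moreover have "y = ?y"
  proof
    fix T show "y T = ?y T"
    proof (cases "j \<in> T \<or> infinite T")
      case True
      have "y T = 0" using hy True finite_subset[of T "{1..n} - {j}"] by (auto simp: ext_pow_def)
      then show ?thesis using True by simp
    next
      case False
      have x0: "x (insert j T) = 0" using hx by (auto simp: ext_pow_def)
      have "m (insert j T) = wsign {j} T * y T" using False
        by (simp add: hm ext_add_def wedge_basis x0)
      then have "wsign {j} T * m (insert j T) = y T"
        by (simp add: mult.assoc[symmetric] wsign_sq)
      then show ?thesis using False by simp
    qed
  qed
  ultimately show "p = (?x, ?y)" using p by simp
qed

theorem lemma5p2:
  fixes n k i j :: nat and L :: "('a::field) ext set"
  assumes char_not_2: "(2::'a) \<noteq> 0"
    and L_sub: "is_subspace n k L"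
    and hL: "\<forall>x\<in>L. wedge (wedge (basis_e 1) (basis_e 2)) x = ext_zero"
    and hij: "3 \<le> i" "i < j" "j \<le> n"
  shows "\<forall>y\<in>slow_shift_space n k j i L.
           wedge (wedge (basis_e 1) (basis_e 2)) y = ext_zero"
proof
  have ss: "avoid12 (slow_shift n k j i m)" if mL: "m \<in> L" for m
  proof -
    have mp: "m \<in> ext_pow k {1..n}" using L_sub mL by (auto simp: is_subspace_def)
    have am: "avoid12 m" using hL mL wedge_avoid12 by blast
    let ?x = "(\<lambda>T. if j \<in> T then 0 else m T)"
    let ?y = "(\<lambda>T. if j \<in> T \<or> infinite T then 0 else wsign {j} T * m (insert j T))"
    have ax: "avoid12 ?x" using am by (auto simp: avoid12_def)
    have ay: "avoid12 ?y" unfolding avoid12_def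
    proof (intro allI impI)
      fix T :: "nat set" assume d: "T \<inter> {1,2} = {}" and f: "finite T"
      have "insert j T \<inter> {1,2} = {}" using d hij by auto
      then have "m (insert j T) = 0" using am f by (auto simp: avoid12_def)
      then show "?y T = 0" by simp
    qed
    have ji: "j \<notin> {1,2}" "i \<notin> {1,2}" using hij by auto
    show ?thesis
      unfolding slow_shift_def decomp_eq[OF mp]
      using avoid12_add[OF ax avoid12_basis[OF ay ji(2)]] avoid12_basis[OF ay ji(1)]
      by simp
  qed
  fix y assume "y \<in> slow_shift_space n k j i L"
  then obtain F c where F: "finite F" "F \<subseteq> slow_shift n k j i ` (L - {ext_zero})"
    and y: "y = (\<lambda>S. \<Sum>u\<in>F. c u * u S)"
    by (auto simp: slow_shift_space_def lspan_def)
  have "avoid12 u" if "u \<in> F" for u using that F(2) ss by auto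
  then have "avoid12 y" unfolding y avoid12_def by (auto intro!: sum.neutral)
  then show "wedge (wedge (basis_e 1) (basis_e 2)) y = ext_zero" by (rule avoid12_wedge)
qed

end
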